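(* Let $s\ge0$, $p\in[1,+\infty)$, $\beta\in\left[-s,\frac dp-s\right]\setminus\{0\}$ and $f\in B^{s,\infty}_p(\mathbb R^d)$. Then $\dim_{\mathcal H}\big(\mathcal E^-(\beta,f)\big)\le d-sp-\beta p$. (The wavelets are not assumed to be compactly supported.)
   Context: Standing setup. $(V_j)_{j\in\mathbb Z}$ is an orthogonal multiresolution analysis of $L^2(\mathbb R^d)$ with scaling function $\varphi$ (the integer translates of $\varphi$ form an orthonormal basis of $V_0$), and $\psi^{(1)},\dots,\psi^{(2^d-1)}$ are associated wavelets: the functions $2^{dj/2}\psi^{(i)}(2^j\cdot-k)$, $i\in\{1,\dots,2^d-1\}$, $j\in\mathbb Z$, $k\in\mathbb Z^d$, form an orthonormal basis of $L^2(\mathbb R^d)$. The functions $\varphi,\psi^{(i)}$ are smooth (at least $\lfloor s\rfloor+1$ continuous derivatives), and they and these derivatives have fast decay: for every $N\ge0$ there is $C_N$ with $|\psi^{(i)}(x)|\le C_N(1+\|x\|)^{-N}$ for all $x$. $\|\cdot\|$ is the supremum norm on $\mathbb R^d$. For $j\ge0$ and $k\in\mathbb Z^d$, the dyadic cube $\lambda=(j,k)$ is $\prod_{m=1}^d[k_m2^{-j},(k_m+1)2^{-j})$; $\Lambda_j$ is the set of dyadic cubes of generation $j$; $\psi^{(i)}_\lambda(x)=\psi^{(i)}(2^jx-k)$. For $f$ in $L^p(\mathbb R^d)$ set $C_k=\int\overline{\varphi(x-k)}f(x)\,dx$ and $c^{(i)}_\lambda=2^{dj}\int\overline{\psi^{(i)}_\lambda(x)}f(x)\,dx$.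 Define $Q_lf(x)=\sum_{i}\sum_{\lambda\in\Lambda_l}c^{(i)}_\lambda\psi^{(i)}_\lambda(x)$, $P_jf(x)=\sum_kC_k\varphi(x-k)+\sum_{0\le l<j}Q_lf(x)$, and, when $(P_jf(x))_j$ converges, $R_jf(x)=\sum_{l\ge j}Q_lf(x)$. The Besov space $B^{s,q}_p(\mathbb R^d)$ consists of those $f$ with $(C_k)\in\ell^p$ and $(\varepsilon_j)_{j\ge0}\in\ell^q$, where $\varepsilon_j=2^{(s-d/p)j}\big(\sum_i\sum_{\lambda\in\Lambda_j}|c^{(i)}_\lambda|^p\big)^{1/p}$; its norm is $\|(C_k)\|_{\ell^p}+\|(\varepsilon_j)\|_{\ell^q}$. Level set (with $\log0=-\infty$): for $\beta>0$, $\mathcal E^-(\beta,f)=\{x:\limsup_j\frac{\log|P_jf(x)|}{j\log2}\ge\beta\}$; for $\beta<0$, $\mathcal E^-(\beta,f)=\{x:(P_jf(x))_j\text{ converges and }\limsup_j\frac{\log|R_jf(x)|}{j\log2}\ge\beta\}$. $\dim_{\mathcal H}$ is Hausdorff dimension. *)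

theory Defs
  imports "HOL-Analysis.Analysis"
begin

type_synonym 'n fn = "real^'n \<Rightarrow> complex"

section \<open>Lattice points and L^p spaces on R^d (d = CARD('n))\<close>

definition ofZ :: "int^'n \<Rightarrow> real^'n" where
  "ofZ k = (\<chi> i. real_of_int (k $ i))"

definition Lp :: "real \<Rightarrow> ('n::finite) fn set" where
  "Lp p = {f. f \<in> borel_measurable lborel \<and> integrable lborel (\<lambda>x. cmod (f x) powr p)}"

definition L2 :: "('n::finite) fn set" where
  "L2 = {f. f \<in> borel_measurable lborel \<and> integrable lborel (\<lambda>x. (cmod (f x))\<^sup>2)}"

definition l2_inner :: "('n::finite) fn \<Rightarrow> 'n fn \<Rightarrow> complex" where
  "l2_inner f g = (LINT x|lborel. f x * cnj (g x))"

definition l2_norm :: "('n::finite) fn \<Rightarrow> real" where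
  "l2_norm f = sqrt (LINT x|lborel. (cmod (f x))\<^sup>2)"

definition closed_L2_subspace :: "('n::finite) fn set \<Rightarrow> bool" where
  "closed_L2_subspace S \<longleftrightarrow>
     S \<subseteq> L2 \<and> (\<lambda>x. 0) \<in> S \<and>
     (\<forall>f\<in>S. \<forall>g\<in>S. (\<lambda>x. f x + g x) \<in> S) \<and>
     (\<forall>f\<in>S. \<forall>c. (\<lambda>x. c * f x) \<in> S) \<and>
     (\<forall>f\<in>S. \<forall>g\<in>L2. (AE x in lborel. f x = g x) \<longrightarrow> g \<in> S) \<and>
     (\<forall>u g. (\<forall>n::nat. u n \<in> S) \<and> g \<in> L2 \<and>
            (\<lambda>n. l2_norm (\<lambda>x. u n x - g x)) \<longlonglongrightarrow> 0 \<longrightarrow> g \<in> S)"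

definition ONB_of :: "'i set \<Rightarrow> ('i \<Rightarrow> ('n::finite) fn) \<Rightarrow> 'n fn set \<Rightarrow> bool" where
  "ONB_of I e S \<longleftrightarrow>
     (\<forall>a\<in>I. e a \<in> S) \<and>
     (\<forall>a\<in>I. \<forall>b\<in>I. l2_inner (e a) (e b) = (if a = b then 1 else 0)) \<and>
     (\<forall>g\<in>S. (\<forall>a\<in>I. l2_inner g (e a) = 0) \<longrightarrow> (AE x in lborel. g x = 0))"

definition wav_index :: "'n::finite itself \<Rightarrow> nat set" where
  "wav_index _ = {1..2 ^ CARD('n) - 1}"

definition orth_MRA_wavelets ::
  "(int \<Rightarrow> ('n::finite) fn set) \<Rightarrow> 'n fn \<Rightarrow> (nat \<Rightarrow> 'n fn) \<Rightarrow> bool" where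
  "orth_MRA_wavelets V \<phi> \<psi> \<longleftrightarrow>
     (\<forall>j. closed_L2_subspace (V j)) \<and>
     (\<forall>j. V j \<subseteq> V (j + 1)) \<and>
     (\<forall>j f. f \<in> V j \<longleftrightarrow> (\<lambda>x. f (2 *\<^sub>R x)) \<in> V (j + 1)) \<and>
     (\<forall>g\<in>L2. \<forall>e>0. \<exists>j. \<exists>h\<in>V j. l2_norm (\<lambda>x. g x - h x) < e) \<and>
     (\<forall>g. (\<forall>j. g \<in> V j) \<longrightarrow> (AE x in lborel. g x = 0)) \<and>
     ONB_of UNIV (\<lambda>k x. \<phi> (x - ofZ k)) (V 0) \<and>
     (\<forall>i\<in>wav_index TYPE('n). \<psi> i \<in> V 1 \<and> (\<forall>g\<in>V 0. l2_inner (\<psi> i) g = 0)) \<and>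
     ONB_of (wav_index TYPE('n) \<times> (UNIV :: int set) \<times> (UNIV :: (int^'n) set))
       (\<lambda>(i, j, k) x. complex_of_real (2 powr (real CARD('n) * real_of_int j / 2))
                       * \<psi> i (2 powr (real_of_int j) *\<^sub>R x - ofZ k))
       L2"

definition fast_decay :: "('n::finite) fn \<Rightarrow> bool" where
  "fast_decay g \<longleftrightarrow> (\<forall>N::real. N \<ge> 0 \<longrightarrow>
      (\<exists>C. \<forall>x. cmod (g x) \<le> C * (1 + infnorm x) powr (- N)))"

fun smooth_decay :: "nat \<Rightarrow> ('n::finite) fn \<Rightarrow> bool" where
  "smooth_decay 0 g = (continuous_on UNIV g \<and> fast_decay g)"
| "smooth_decay (Suc m) g = (continuous_on UNIV g \<and> fast_decay g \<and>
     (\<forall>i. \<exists>g'. (\<forall>x. ((\<lambda>t. g (x + t *\<^sub>R axis i 1)) has_vector_derivative g' x) (at 0))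
               \<and> smooth_decay m g'))"

definition scal_coef :: "('n::finite) fn \<Rightarrow> 'n fn \<Rightarrow> int^'n \<Rightarrow> complex" where
  "scal_coef \<phi> f k = (LINT x|lborel. cnj (\<phi> (x - ofZ k)) * f x)"

definition wav_coef :: "(nat \<Rightarrow> ('n::finite) fn) \<Rightarrow> 'n fn \<Rightarrow> nat \<Rightarrow> nat \<Rightarrow> int^'n \<Rightarrow> complex" where
  "wav_coef \<psi> f i j k = of_real (2 ^ (CARD('n) * j)) *
      (LINT x|lborel. cnj (\<psi> i ((2::real) ^ j *\<^sub>R x - ofZ k)) * f x)"

definition Qop :: "(nat \<Rightarrow> ('n::finite) fn) \<Rightarrow> nat \<Rightarrow> 'n fn \<Rightarrow> real^'n \<Rightarrow> complex" where
  "Qop \<psi> l f x = (\<Sum>i\<in>wav_index TYPE('n).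
      infsum (\<lambda>k. wav_coef \<psi> f i l k * \<psi> i ((2::real) ^ l *\<^sub>R x - ofZ k)) UNIV)"

definition Pop :: "('n::finite) fn \<Rightarrow> (nat \<Rightarrow> 'n fn) \<Rightarrow> nat \<Rightarrow> 'n fn \<Rightarrow> real^'n \<Rightarrow> complex" where
  "Pop \<phi> \<psi> j f x = infsum (\<lambda>k. scal_coef \<phi> f k * \<phi> (x - ofZ k)) UNIV
      + (\<Sum>l<j. Qop \<psi> l f x)"

text \<open>Meaningful when the sequence of Pop values converges (= summability of the Qop's).\<close>
definition Rop :: "(nat \<Rightarrow> ('n::finite) fn) \<Rightarrow> nat \<Rightarrow> 'n fn \<Rightarrow> real^'n \<Rightarrow> complex" where
  "Rop \<psi> j f x = (\<Sum>n. Qop \<psi> (j + n) f x)"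

definition besov_eps :: "(nat \<Rightarrow> ('n::finite) fn) \<Rightarrow> real \<Rightarrow> real \<Rightarrow> 'n fn \<Rightarrow> nat \<Rightarrow> real" where
  "besov_eps \<psi> s p f j = 2 powr ((s - real CARD('n) / p) * real j) *
     (infsum (\<lambda>(i, k). cmod (wav_coef \<psi> f i j k) powr p) (wav_index TYPE('n) \<times> UNIV)) powr (1 / p)"

definition besov_inf :: "('n::finite) fn \<Rightarrow> (nat \<Rightarrow> 'n fn) \<Rightarrow> real \<Rightarrow> real \<Rightarrow> 'n fn set" where
  "besov_inf \<phi> \<psi> s p = {f. f \<in> Lp p \<and>
      (\<lambda>k. cmod (scal_coef \<phi> f k) powr p) summable_on UNIV \<and>
      (\<forall>j. (\<lambda>(i, k). cmod (wav_coef \<psi> f i j k) powr p) summable_on (wav_index TYPE('n) \<times> UNIV)) \<and>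
      bounded (range (besov_eps \<psi> s p f))}"

definition logE :: "real \<Rightarrow> ereal" where
  "logE y = (if y = 0 then -\<infinity> else ereal (ln y))"

definition Eminus :: "('n::finite) fn \<Rightarrow> (nat \<Rightarrow> 'n fn) \<Rightarrow> real \<Rightarrow> 'n fn \<Rightarrow> (real^'n) set" where
  "Eminus \<phi> \<psi> \<beta> f =
     (if \<beta> > 0 then
        {x. limsup (\<lambda>j. logE (cmod (Pop \<phi> \<psi> j f x)) / ereal (real j * ln 2)) \<ge> ereal \<beta>}
      else
        {x. convergent (\<lambda>j. Pop \<phi> \<psi> j f x) \<and>
            limsup (\<lambda>j. logE (cmod (Rop \<psi> j f x)) / ereal (real j * ln 2)) \<ge> ereal \<beta>})"

definition hausdorff_pre :: "real \<Rightarrow> real \<Rightarrow> 'a::metric_space set \<Rightarrow> ennreal" where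
  "hausdorff_pre t \<delta> E =
     (INF U \<in> {U :: nat \<Rightarrow> 'a set. E \<subseteq> (\<Union>n. U n) \<and> (\<forall>n. bounded (U n) \<and> diameter (U n) \<le> \<delta>)}.
        \<Sum>n. ennreal (diameter (U n) powr t))"

definition hausdorff_measure :: "real \<Rightarrow> 'a::metric_space set \<Rightarrow> ennreal" where
  "hausdorff_measure t E = (SUP \<delta> \<in> {0<..}. hausdorff_pre t \<delta> E)"

definition hausdorff_dim :: "'a::metric_space set \<Rightarrow> real" where
  "hausdorff_dim E = Inf {t. t \<ge> 0 \<and> hausdorff_measure t E = 0}"

end

theory Submission
  imports Defs
begin


lemma summable_inv_sq_nat: "(\<lambda>n::nat. 1 / (1 + real n)^2) summable_on UNIV"
proof -
  have "summable (\<lambda>n::nat. inverse (real n ^ 2))"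
    by (rule inverse_power_summable) auto
  hence "summable (\<lambda>n::nat. inverse (real (Suc n) ^ 2))"
    using summable_Suc_iff[of "\<lambda>n::nat. inverse (real n ^ 2)"] by simp
  hence "summable (\<lambda>n::nat. 1 / (1 + real n)^2)"
    by (simp add: field_simps add.commute)
  thus ?thesis
    by (subst summable_on_UNIV_nonneg_real_iff) auto
qed

lemma summable_inv_sq_int: "(\<lambda>n::int. 1 / (1 + \<bar>real_of_int n\<bar>)^2) summable_on UNIV"
proof -
  let ?z = "\<lambda>n::int. 1 / (1 + \<bar>real_of_int n\<bar>)^2"
  have U: "(UNIV::int set) = range int \<union> range (\<lambda>n. - int n - 1)"
  proof -
    { fix x :: int
      have "x \<in> range int \<union> range (\<lambda>n. - int n - 1)"
      proof (cases "x \<ge> 0")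
        case True
        hence "x = int (nat x)" by simp
        thus ?thesis by blast
      next
        case False
        hence "x = - int (nat (- x - 1)) - 1" by simp
        thus ?thesis by blast
      qed }
    thus ?thesis by blast
  qed
  have d: "range int \<inter> range (\<lambda>n. - int n - 1) = {}" by auto
  have s1: "?z summable_on range int"
    by (subst summable_on_reindex) (auto simp: o_def intro: summable_inv_sq_nat)
  have s2: "?z summable_on range (\<lambda>n. - int n - 1)"
  proof (subst summable_on_reindex)
    show "inj_on (\<lambda>n. - int n - 1) UNIV" by (auto simp: inj_on_def)
    have "(\<lambda>n::nat. 1 / (1 + real n)^2) summable_on UNIV" by (rule summable_inv_sq_nat)
    then show "(?z \<circ> (\<lambda>n. - int n - 1)) summable_on UNIV"
    proof (rule summable_on_comparison_test)
      fix n :: nat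
      show "(?z \<circ> (\<lambda>n. - int n - 1)) n \<le> 1 / (1 + real n)^2"
        by (auto simp: o_def divide_simps power2_eq_square intro!: mult_mono)
    qed auto
  qed
  show ?thesis unfolding U by (rule summable_on_Un_disjoint[OF s1 s2 d])
qed

definition Z2 :: real where "Z2 = infsum (\<lambda>n::int. 1 / (1 + \<bar>real_of_int n\<bar>)^2) UNIV"

lemma lat1d_pt:
  fixes c :: real and m :: int
  shows "1 / (1 + \<bar>c - real_of_int m\<bar>)^2 \<le> 4 * (1 / (1 + \<bar>real_of_int (m - \<lfloor>c\<rfloor>)\<bar>)^2)"
proof -
  let ?n = "real_of_int (m - \<lfloor>c\<rfloor>)"
  have f1: "real_of_int \<lfloor>c\<rfloor> \<le> c" "c < real_of_int \<lfloor>c\<rfloor> + 1" by linarith+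
  have "1 + \<bar>?n\<bar> \<le> 2 * (1 + \<bar>c - real_of_int m\<bar>)"
  proof -
    consider "m \<le> \<lfloor>c\<rfloor> - 1" | "m = \<lfloor>c\<rfloor>" | "m \<ge> \<lfloor>c\<rfloor> + 1" by linarith
    then show ?thesis
    proof cases
      case 1
      hence "real_of_int m \<le> real_of_int \<lfloor>c\<rfloor> - 1" by linarith
      thus ?thesis using f1 unfolding of_int_diff by (smt (verit))
    next
      case 2 thus ?thesis using f1 unfolding of_int_diff by (smt (verit))
    next
      case 3
      hence "real_of_int m \<ge> real_of_int \<lfloor>c\<rfloor> + 1" by linarith
      thus ?thesis using f1 unfolding of_int_diff by (smt (verit))
    qed
  qed
  hence "(1 + \<bar>?n\<bar>)^2 \<le> (2 * (1 + \<bar>c - real_of_int m\<bar>))^2"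
    by (intro power_mono) auto
  hence "4 / (2 * (1 + \<bar>c - real_of_int m\<bar>))^2 \<le> 4 / (1 + \<bar>?n\<bar>)^2"
    by (intro divide_left_mono) auto
  moreover have "4 / (2 * (1 + \<bar>c - real_of_int m\<bar>))^2 = 1 / (1 + \<bar>c - real_of_int m\<bar>)^2"
  proof -
    have "(2 * (1 + \<bar>c - real_of_int m\<bar>))^2 = 4 * (1 + \<bar>c - real_of_int m\<bar>)^2"
      by (simp only: power_mult_distrib) simp
    thus ?thesis by simp
  qed
  ultimately show ?thesis by simp
qed

lemma lat1d_shift:
  fixes c :: real
  shows "(\<lambda>m::int. 4 * (1 / (1 + \<bar>real_of_int (m - \<lfloor>c\<rfloor>)\<bar>)^2)) summable_on UNIV"
    and "infsum (\<lambda>m::int. 4 * (1 / (1 + \<bar>real_of_int (m - \<lfloor>c\<rfloor>)\<bar>)^2)) UNIV = 4 * Z2"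
proof -
  have bij: "bij_betw (\<lambda>m::int. m - \<lfloor>c\<rfloor>) UNIV UNIV"
    by (rule bij_betwI[of _ _ _ "\<lambda>m. m + \<lfloor>c\<rfloor>"]) auto
  have s: "(\<lambda>m::int. (1 / (1 + \<bar>real_of_int (m - \<lfloor>c\<rfloor>)\<bar>)^2)) summable_on UNIV"
    using summable_on_reindex_bij_betw[OF bij, of "\<lambda>n. 1 / (1 + \<bar>real_of_int n\<bar>)^2"]
      summable_inv_sq_int by simp
  show "(\<lambda>m::int. 4 * (1 / (1 + \<bar>real_of_int (m - \<lfloor>c\<rfloor>)\<bar>)^2)) summable_on UNIV"
    by (rule summable_on_cmult_right[OF s])
  have "infsum (\<lambda>m::int. (1 / (1 + \<bar>real_of_int (m - \<lfloor>c\<rfloor>)\<bar>)^2)) UNIV = Z2"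
    unfolding Z2_def using infsum_reindex_bij_betw[OF bij, of "\<lambda>n. 1 / (1 + \<bar>real_of_int n\<bar>)^2"] by simp
  then show "infsum (\<lambda>m::int. 4 * (1 / (1 + \<bar>real_of_int (m - \<lfloor>c\<rfloor>)\<bar>)^2)) UNIV = 4 * Z2"
    by (subst infsum_cmult_right) (use s in auto)
qed

lemma lat1d:
  fixes c :: real
  shows "(\<lambda>m::int. 1 / (1 + \<bar>c - real_of_int m\<bar>)^2) summable_on UNIV"
    and "infsum (\<lambda>m::int. 1 / (1 + \<bar>c - real_of_int m\<bar>)^2) UNIV \<le> 4 * Z2"
    and "infsum (\<lambda>m::int. 1 / (1 + \<bar>c - real_of_int m\<bar>)^2) UNIV > 0"
proof -
  show s: "(\<lambda>m::int. 1 / (1 + \<bar>c - real_of_int m\<bar>)^2) summable_on UNIV"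
    by (rule summable_on_comparison_test[OF lat1d_shift(1)[of c]]) (use lat1d_pt in auto)
  show "infsum (\<lambda>m::int. 1 / (1 + \<bar>c - real_of_int m\<bar>)^2) UNIV \<le> 4 * Z2"
    by (subst lat1d_shift(2)[of c, symmetric], rule infsum_mono[OF s lat1d_shift(1)]) (rule lat1d_pt)
  have "infsum (\<lambda>m::int. 1 / (1 + \<bar>c - real_of_int m\<bar>)^2) {0} \<le> infsum (\<lambda>m::int. 1 / (1 + \<bar>c - real_of_int m\<bar>)^2) UNIV"
    by (rule infsum_mono2) (use s in auto)
  moreover have "infsum (\<lambda>m::int. 1 / (1 + \<bar>c - real_of_int m\<bar>)^2) {0} > 0" by simp
  ultimately show "infsum (\<lambda>m::int. 1 / (1 + \<bar>c - real_of_int m\<bar>)^2) UNIV > 0" by linarith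
qed

definition pw :: "real^'n::finite \<Rightarrow> real" where
  "pw z = (\<Prod>j\<in>UNIV. 1 + \<bar>z $ j\<bar>)"

lemma pw_ge1: "pw z \<ge> 1"
  unfolding pw_def by (rule prod_ge_1) auto

lemma lattice_sum:
  fixes y :: "real^'n::finite"
  shows "(\<lambda>k::int^'n. 1 / pw (y - ofZ k)^2) summable_on UNIV"
    and "infsum (\<lambda>k::int^'n. 1 / pw (y - ofZ k)^2) UNIV \<le> (4 * Z2) ^ CARD('n)"
proof -
  define h where "h = (\<lambda>j (m::int). 1 / (1 + \<bar>y $ j - real_of_int m\<bar>)^2)"
  have habs: "(\<lambda>x. norm (h j x)) summable_on UNIV" for j
    unfolding h_def using lat1d(1)[of "y $ j"] by simp
  have eq: "infsum (\<lambda>g. \<Prod>j\<in>UNIV. h j (g j)) (PiE UNIV (\<lambda>_. UNIV)) = (\<Prod>j\<in>UNIV. infsum (h j) UNIV)"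
    by (rule infsum_prod_PiE_abs) (use habs in auto)
  have pos: "(\<Prod>j\<in>UNIV. infsum (h j) UNIV) > 0"
    by (rule prod_pos) (use lat1d(3) in \<open>auto simp: h_def\<close>)
  have sPi: "(\<lambda>g. \<Prod>j\<in>UNIV. h j (g j)) summable_on UNIV"
  proof (rule ccontr)
    assume "\<not> ?thesis"
    hence "infsum (\<lambda>g. \<Prod>j\<in>UNIV. h j (g j)) (PiE UNIV (\<lambda>_. UNIV)) = 0"
      using infsum_not_exists by simp
    thus False using eq pos by (metis less_irrefl)
  qed
  have pt: "1 / pw (y - ofZ k)^2 = (\<Prod>j\<in>UNIV. h j (vec_nth k j))" for k :: "int^'n"
    unfolding pw_def h_def ofZ_def by (simp add: prod_dividef prod_power_distrib)
  have bij: "bij_betw vec_nth (UNIV :: (int^'n) set) UNIV"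
    by (intro bij_betwI[of _ _ _ vec_lambda]) (auto simp: vec_eq_iff)
  show "(\<lambda>k::int^'n. 1 / pw (y - ofZ k)^2) summable_on UNIV"
    unfolding pt using summable_on_reindex_bij_betw[OF bij, of "\<lambda>g. \<Prod>j\<in>UNIV. h j (g j)"] sPi by simp
  have "infsum (\<lambda>k::int^'n. 1 / pw (y - ofZ k)^2) UNIV = (\<Prod>j\<in>UNIV. infsum (h j) UNIV)"
    unfolding pt using infsum_reindex_bij_betw[OF bij, of "\<lambda>g. \<Prod>j\<in>UNIV. h j (g j)"] eq by simp
  also have "\<dots> \<le> (\<Prod>j\<in>(UNIV::'n set). 4 * Z2)"
    by (rule prod_mono) (use lat1d in \<open>auto simp: h_def less_imp_le\<close>)
  finally show "infsum (\<lambda>k::int^'n. 1 / pw (y - ofZ k)^2) UNIV \<le> (4 * Z2) ^ CARD('n)" by simp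
qed



lemma pw_pos: "pw z > 0" using pw_ge1[of z] by linarith

lemma pw_powr_le: "b \<ge> 2 \<Longrightarrow> pw z powr (-b) \<le> 1 / pw z ^ 2"
proof -
  assume b: "b \<ge> 2"
  have "pw z powr (-b) \<le> pw z powr (-2)"
    by (rule powr_mono) (use b pw_ge1 in auto)
  also have "pw z powr (-2) = 1 / pw z ^ 2"
    using pw_pos[of z] by (simp add: powr_minus_divide powr_realpow)
  finally show ?thesis .
qed

lemma pw_le_infnorm: "pw (z::real^'n::finite) \<le> (1 + infnorm z) powr real CARD('n)"
proof -
  have "pw z \<le> (\<Prod>j\<in>(UNIV::'n set). 1 + infnorm z)"
    unfolding pw_def by (rule prod_mono) (auto simp: component_le_infnorm_cart)
  also have "\<dots> = (1 + infnorm z) powr real CARD('n)"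
    using infnorm_pos_le[of z] by (simp add: powr_realpow)
  finally show ?thesis .
qed

lemma decay_pw:
  fixes g :: "('n::finite) fn"
  assumes "fast_decay g" "b \<ge> 0"
  shows "\<exists>C\<ge>0. \<forall>y. cmod (g y) \<le> C * pw y powr (-b)"
proof -
  obtain C where C: "\<And>x. cmod (g x) \<le> C * (1 + infnorm x) powr (- (real CARD('n) * b))"
    using assms unfolding fast_decay_def by (meson mult_nonneg_nonneg of_nat_0_le_iff)
  have C0: "C \<ge> 0"
  proof -
    have "0 \<le> C * (1 + infnorm (0::real^'n)) powr (- (real CARD('n) * b))"
      using C[of 0] norm_ge_zero order_trans by blast
    thus ?thesis by (simp add: zero_le_mult_iff infnorm_0)
  qed
  have "cmod (g y) \<le> C * pw y powr (-b)" for y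
  proof -
    have i0: "1 + infnorm y \<ge> 1" using infnorm_pos_le[of y] by simp
    have "pw y powr b \<le> ((1 + infnorm y) powr real CARD('n)) powr b"
      by (rule powr_mono2) (use assms(2) pw_le_infnorm[of y] pw_pos[of y] in auto)
    also have "\<dots> = (1 + infnorm y) powr (real CARD('n) * b)"
      by (simp add: powr_powr)
    finally have le: "pw y powr b \<le> (1 + infnorm y) powr (real CARD('n) * b)" .
    have "(1 + infnorm y) powr (- (real CARD('n) * b)) \<le> pw y powr (-b)"
      using le pw_pos[of y] i0 by (simp add: powr_minus divide_simps le_imp_inverse_le)
    hence "C * (1 + infnorm y) powr (- (real CARD('n) * b)) \<le> C * pw y powr (-b)"
      by (rule mult_left_mono) (rule C0)
    thus ?thesis using C[of y] by linarith
  qed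
  thus ?thesis using C0 by blast
qed

definition cc :: "(nat \<Rightarrow> ('n::finite) fn) \<Rightarrow> 'n fn \<Rightarrow> nat \<Rightarrow> nat \<Rightarrow> int^'n \<Rightarrow> real" where
  "cc \<psi> f l i k = cmod (wav_coef \<psi> f i l k)"

definition Gf :: "real \<Rightarrow> (nat \<Rightarrow> ('n::finite) fn) \<Rightarrow> 'n fn \<Rightarrow> nat \<Rightarrow> real^'n \<Rightarrow> real" where
  "Gf b \<psi> f l x = (\<Sum>i\<in>wav_index TYPE('n).
      infsum (\<lambda>k. cc \<psi> f l i k * pw ((2::real)^l *\<^sub>R x - ofZ k) powr (-b)) UNIV)"

lemma inner_summable:
  fixes y :: "real^'n::finite"
  assumes "b \<ge> 2" "\<And>k. 0 \<le> a k" "\<And>k. a k \<le> Bd"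
  shows "(\<lambda>k::int^'n. a k * pw (y - ofZ k) powr (-b)) summable_on UNIV"
proof -
  have Bd: "Bd \<ge> 0" using assms(2,3)[of 0] by linarith
  have "(\<lambda>k::int^'n. Bd * (1 / pw (y - ofZ k)^2)) summable_on UNIV"
    by (rule summable_on_cmult_right) (rule lattice_sum(1))
  thus ?thesis
  proof (rule summable_on_comparison_test)
    fix k
    show "a k * pw (y - ofZ k) powr (-b) \<le> Bd * (1 / pw (y - ofZ k)^2)"
      by (rule mult_mono) (use assms pw_powr_le[of b] Bd in auto)
  qed (use assms(2) in auto)
qed

lemma Qbound:
  fixes \<psi> :: "nat \<Rightarrow> ('n::finite) fn"
  assumes dec: "\<And>i y. i \<in> wav_index TYPE('n) \<Longrightarrow> cmod (\<psi> i y) \<le> C * pw y powr (-b)"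
    and b: "b \<ge> 2" and C: "C \<ge> 0"
    and bd: "\<And>i k. i \<in> wav_index TYPE('n) \<Longrightarrow> cc \<psi> f l i k \<le> Bd"
  shows "cmod (Qop \<psi> l f x) \<le> C * Gf b \<psi> f l x"
proof -
  let ?y = "(2::real)^l *\<^sub>R x"
  have "cmod (infsum (\<lambda>k. wav_coef \<psi> f i l k * \<psi> i (?y - ofZ k)) UNIV)
        \<le> C * infsum (\<lambda>k. cc \<psi> f l i k * pw (?y - ofZ k) powr (-b)) UNIV"
    if i: "i \<in> wav_index TYPE('n)" for i
  proof -
    have s: "(\<lambda>k. cc \<psi> f l i k * pw (?y - ofZ k) powr (-b)) summable_on UNIV"
      by (rule inner_summable[OF b]) (use bd i in \<open>auto simp: cc_def\<close>)
    hence s2: "(\<lambda>k. C * (cc \<psi> f l i k * pw (?y - ofZ k) powr (-b))) summable_on UNIV"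
      by (rule summable_on_cmult_right)
    have pt: "norm (wav_coef \<psi> f i l k * \<psi> i (?y - ofZ k)) \<le> C * (cc \<psi> f l i k * pw (?y - ofZ k) powr (-b))" for k
    proof -
      have "norm (wav_coef \<psi> f i l k * \<psi> i (?y - ofZ k)) = cc \<psi> f l i k * cmod (\<psi> i (?y - ofZ k))"
        by (simp add: cc_def norm_mult)
      also have "\<dots> \<le> cc \<psi> f l i k * (C * pw (?y - ofZ k) powr (-b))"
        by (rule mult_left_mono) (use dec[OF i] in \<open>auto simp: cc_def\<close>)
      finally show ?thesis by (simp add: algebra_simps)
    qed
    have sn: "(\<lambda>k. norm (wav_coef \<psi> f i l k * \<psi> i (?y - ofZ k))) summable_on UNIV"
      by (rule summable_on_comparison_test[OF s2]) (use pt in auto)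
    have "cmod (infsum (\<lambda>k. wav_coef \<psi> f i l k * \<psi> i (?y - ofZ k)) UNIV)
          \<le> infsum (\<lambda>k. norm (wav_coef \<psi> f i l k * \<psi> i (?y - ofZ k))) UNIV"
      by (rule norm_infsum_bound) (use sn in simp)
    also have "\<dots> \<le> infsum (\<lambda>k. C * (cc \<psi> f l i k * pw (?y - ofZ k) powr (-b))) UNIV"
      by (rule infsum_mono[OF sn s2 pt])
    also have "\<dots> = C * infsum (\<lambda>k. cc \<psi> f l i k * pw (?y - ofZ k) powr (-b)) UNIV"
      by (rule infsum_cmult_right) (use s in auto)
    finally show ?thesis .
  qed
  hence "cmod (Qop \<psi> l f x) \<le> (\<Sum>i\<in>wav_index TYPE('n). C * infsum (\<lambda>k. cc \<psi> f l i k * pw (?y - ofZ k) powr (-b)) UNIV)"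
    unfolding Qop_def by (intro order_trans[OF norm_sum] sum_mono) auto
  also have "\<dots> = C * Gf b \<psi> f l x"
    unfolding Gf_def by (simp add: sum_distrib_left)
  finally show ?thesis .
qed



lemma Z2_pos: "Z2 > 0"
  using lat1d(3)[of 0] unfolding Z2_def by simp

lemma sum_le_prod1:
  assumes "finite A" "\<And>j. a j \<ge> (0::real)"
  shows "(\<Sum>j\<in>A. a j) \<le> (\<Prod>j\<in>A. 1 + a j)"
  using assms(1)
proof (induction A rule: finite_induct)
  case (insert x F)
  have p1: "(\<Prod>j\<in>F. 1 + a j) \<ge> 1" by (rule prod_ge_1) (use assms(2) in auto)
  have "(\<Sum>j\<in>insert x F. a j) = a x + (\<Sum>j\<in>F. a j)" using insert by simp
  also have "\<dots> \<le> a x * (\<Prod>j\<in>F. 1 + a j) + (\<Prod>j\<in>F. 1 + a j)"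
    using insert.IH p1 assms(2)[of x] by (smt (verit) mult_left_mono mult_cancel_left1)
  also have "\<dots> = (\<Prod>j\<in>insert x F. 1 + a j)" using insert by (simp add: algebra_simps)
  finally show ?case .
qed simp

lemma norm_le_pw: "norm (z::real^'n::finite) \<le> pw z"
  using norm_le_l1_cart[of z] sum_le_prod1[of UNIV "\<lambda>j. \<bar>z $ j\<bar>"] unfolding pw_def by simp

lemma dist_le_pw:
  "dist x (((1/2)::real)^l *\<^sub>R ofZ k) \<le> ((1/2)::real)^l * pw ((2::real)^l *\<^sub>R x - ofZ k)"
proof -
  have "x - ((1/2)::real)^l *\<^sub>R ofZ k = ((1/2)::real)^l *\<^sub>R ((2::real)^l *\<^sub>R x - ofZ k)"
    by (simp add: algebra_simps power_one_over)
  hence "dist x (((1/2)::real)^l *\<^sub>R ofZ k) = ((1/2)::real)^l * norm ((2::real)^l *\<^sub>R x - ofZ k)"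
    by (simp add: dist_norm)
  also have "\<dots> \<le> ((1/2)::real)^l * pw ((2::real)^l *\<^sub>R x - ofZ k)"
    by (rule mult_left_mono[OF norm_le_pw]) simp
  finally show ?thesis .
qed

lemma cover_step:
  fixes y :: "real^'n::finite" and I :: "nat set"
  assumes I: "finite I" "I \<noteq> {}"
    and M: "M > 0"
    and a0: "\<And>i k. i \<in> I \<Longrightarrow> 0 \<le> a i k" and abd: "\<And>i k. i \<in> I \<Longrightarrow> a i k \<le> Bd"
    and X: "X > 0"
    and G: "(\<Sum>i\<in>I. infsum (\<lambda>k::int^'n. a i k * pw (y - ofZ k) powr (-(M+2))) UNIV) \<ge> X"
  shows "\<exists>i\<in>I. \<exists>k. a i k \<ge> X / (2 * real (card I) * (4 * Z2) ^ CARD('n)) * pw (y - ofZ k) powr M"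
proof (rule ccontr)
  define X' where "X' = X / (2 * real (card I) * (4 * Z2) ^ CARD('n))"
  have cI: "real (card I) > 0" using I by auto
  have S0: "(4 * Z2) ^ CARD('n) > 0" using Z2_pos by simp
  have X': "X' > 0" unfolding X'_def using X cI S0 by simp
  assume "\<not> ?thesis"
  hence lt: "a i k < X' * pw (y - ofZ k) powr M" if "i \<in> I" for i k
    using that unfolding X'_def by (meson not_le)
  have each: "infsum (\<lambda>k::int^'n. a i k * pw (y - ofZ k) powr (-(M+2))) UNIV \<le> X' * (4 * Z2) ^ CARD('n)"
    if i: "i \<in> I" for i
  proof -
    have s1: "(\<lambda>k::int^'n. a i k * pw (y - ofZ k) powr (-(M+2))) summable_on UNIV"
      by (rule inner_summable[of "M+2" _ Bd]) (use M a0 abd i in auto)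
    have s2: "(\<lambda>k::int^'n. X' * (1 / pw (y - ofZ k)^2)) summable_on UNIV"
      by (rule summable_on_cmult_right) (rule lattice_sum(1))
    have pt: "a i k * pw (y - ofZ k) powr (-(M+2)) \<le> X' * (1 / pw (y - ofZ k)^2)" for k
    proof -
      have "a i k * pw (y - ofZ k) powr (-(M+2)) \<le> (X' * pw (y - ofZ k) powr M) * pw (y - ofZ k) powr (-(M+2))"
        by (rule mult_right_mono) (use lt[OF i, of k] in auto)
      also have "\<dots> = X' * (pw (y - ofZ k) powr M * pw (y - ofZ k) powr (-(M+2)))" by simp
      also have "pw (y - ofZ k) powr M * pw (y - ofZ k) powr (-(M+2)) = pw (y - ofZ k) powr (-2)"
        by (simp add: powr_add[symmetric])
      also have "pw (y - ofZ k) powr (-2) = 1 / pw (y - ofZ k)^2"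
        using pw_pos[of "y - ofZ k"] by (simp add: powr_minus_divide powr_realpow)
      finally show ?thesis .
    qed
    have "infsum (\<lambda>k::int^'n. a i k * pw (y - ofZ k) powr (-(M+2))) UNIV \<le> infsum (\<lambda>k::int^'n. X' * (1 / pw (y - ofZ k)^2)) UNIV"
      by (rule infsum_mono[OF s1 s2 pt])
    also have "\<dots> = X' * infsum (\<lambda>k::int^'n. 1 / pw (y - ofZ k)^2) UNIV"
      by (rule infsum_cmult_right) (rule lattice_sum(1))
    also have "\<dots> \<le> X' * (4 * Z2) ^ CARD('n)"
      by (rule mult_left_mono[OF lattice_sum(2)]) (use X' in simp)
    finally show ?thesis .
  qed
  have "(\<Sum>i\<in>I. infsum (\<lambda>k::int^'n. a i k * pw (y - ofZ k) powr (-(M+2))) UNIV) \<le> (\<Sum>i\<in>I. X' * (4 * Z2) ^ CARD('n))"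
    by (rule sum_mono) (rule each)
  also have "\<dots> = X / 2" unfolding X'_def using cI S0 Z2_pos by simp
  finally show False using G X by linarith
qed



lemma haus_pre_zero:
  fixes E :: "'a::euclidean_space set" and ctr :: "nat \<Rightarrow> 'q::countable \<Rightarrow> 'a" and rad :: "nat \<Rightarrow> 'q \<Rightarrow> real"
  assumes t: "t > 0"
    and rad0: "\<And>l q. rad l q \<ge> 0"
    and cov: "\<And>x L. x \<in> E \<Longrightarrow> \<exists>l\<ge>L. \<exists>q. dist x (ctr l q) \<le> rad l q"
    and sm: "\<And>l. (\<lambda>q. (2 * rad l q) powr t) summable_on UNIV"
    and sb: "\<And>l. infsum (\<lambda>q. (2 * rad l q) powr t) UNIV \<le> A * \<theta>^l"
    and th: "0 \<le> \<theta>" "\<theta> < 1"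
    and rb: "\<And>l q. rad l q \<le> R * \<eta>^l" and eta: "0 \<le> \<eta>" "\<eta> < 1"
    and \<delta>: "\<delta> > 0" and \<epsilon>: "\<epsilon> > 0"
  shows "hausdorff_pre t \<delta> E \<le> ennreal \<epsilon>"
proof -
  have A0: "A \<ge> 0"
  proof -
    have "0 \<le> infsum (\<lambda>q. (2 * rad 0 q) powr t) UNIV" by (rule infsum_nonneg) simp
    thus ?thesis using sb[of 0] by simp
  qed
  have "(\<lambda>L. A * \<theta>^L / (1 - \<theta>)) \<longlonglongrightarrow> A * 0 / (1 - \<theta>)"
    by (intro tendsto_intros LIMSEQ_power_zero) (use th in auto)
  hence ev1: "eventually (\<lambda>L. A * \<theta>^L / (1 - \<theta>) < \<epsilon>) sequentially"
    using \<epsilon> by (simp add: order_tendstoD(2))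
  have "(\<lambda>L. R * \<eta>^L) \<longlonglongrightarrow> R * 0"
    by (intro tendsto_intros LIMSEQ_power_zero) (use eta in auto)
  hence ev2: "eventually (\<lambda>L. R * \<eta>^L < \<delta>/2) sequentially"
    using \<delta> order_tendstoD(2)[of "\<lambda>L. R * \<eta>^L" 0 sequentially "\<delta>/2"] by simp
  obtain N1 where N1: "\<And>n. n \<ge> N1 \<Longrightarrow> A * \<theta>^n / (1 - \<theta>) < \<epsilon>"
    using ev1 unfolding eventually_sequentially by blast
  obtain N2 where N2: "\<And>n. n \<ge> N2 \<Longrightarrow> R * \<eta>^n < \<delta>/2"
    using ev2 unfolding eventually_sequentially by blast
  define L where "L = max N1 N2"
  have L1: "A * \<theta>^L / (1 - \<theta>) < \<epsilon>" by (rule N1) (simp add: L_def)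
  have L2: "\<And>l. l \<ge> L \<Longrightarrow> R * \<eta>^l < \<delta>/2" by (rule N2) (simp add: L_def)
  define e :: "nat \<Rightarrow> nat \<times> 'q" where "e = from_nat_into UNIV"
  have inf: "infinite (UNIV :: (nat \<times> 'q) set)"
  proof -
    have "infinite (range (\<lambda>n::nat. (n, undefined::'q)))"
      by (rule range_inj_infinite) (auto simp: inj_on_def)
    thus ?thesis by (rule infinite_super[OF subset_UNIV])
  qed
  have bij: "bij_betw e UNIV UNIV"
    unfolding e_def by (rule bij_betw_from_nat_into) (use inf in auto)
  define U where "U = (\<lambda>n. cball (ctr (L + fst (e n)) (snd (e n))) (rad (L + fst (e n)) (snd (e n))))"
  define g where "g = (\<lambda>(l', q). (2 * rad (L + l') q) powr t)"
  have Ucov: "U \<in> {U. E \<subseteq> (\<Union>n. U n) \<and> (\<forall>n. bounded (U n) \<and> diameter (U n) \<le> \<delta>)}"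
  proof (intro CollectI conjI allI subsetI)
    fix x assume "x \<in> E"
    then obtain l q where l: "l \<ge> L" "dist x (ctr l q) \<le> rad l q" using cov by blast
    have "(l - L, q) \<in> range e" using bij by (simp add: bij_betw_def)
    then obtain n where n: "e n = (l - L, q)" by (metis imageE)
    have "x \<in> U n" unfolding U_def n using l by (simp add: dist_commute)
    thus "x \<in> (\<Union>n. U n)" by blast
  next
    fix n
    show "bounded (U n)" unfolding U_def by simp
    have "rad (L + fst (e n)) (snd (e n)) \<le> R * \<eta>^(L + fst (e n))" by (rule rb)
    also have "\<dots> < \<delta>/2" by (rule L2) simp
    finally show "diameter (U n) \<le> \<delta>" unfolding U_def using rad0[of "L + fst (e n)" "snd (e n)"] by simp
  qed
  have dg: "diameter (U n) powr t = g (e n)" for n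
    unfolding U_def g_def using rad0[of "L + fst (e n)" "snd (e n)"] by (simp add: case_prod_beta)
  define gs where "gs = (\<lambda>l'. infsum (\<lambda>q. (2 * rad (L + l') q) powr t) UNIV)"
  have gs0: "gs l' \<ge> 0" for l' unfolding gs_def by (rule infsum_nonneg) simp
  have geo: "summable (\<lambda>l'. A * \<theta>^L * \<theta>^l')"
    by (intro summable_mult summable_geometric) (use th in auto)
  have gsb: "gs l' \<le> A * \<theta>^L * \<theta>^l'" for l'
    using sb[of "L + l'"] unfolding gs_def by (simp add: power_add mult.assoc)
  have geo': "(\<lambda>l'. A * \<theta>^L * \<theta>^l') summable_on UNIV"
    by (subst summable_on_UNIV_nonneg_real_iff) (use geo A0 th in auto)
  have gss: "gs summable_on UNIV"
    by (rule summable_on_comparison_test[OF geo']) (use gsb gs0 in auto)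
  have gsum: "g summable_on UNIV"
  proof -
    have "g summable_on Sigma UNIV (\<lambda>_. UNIV)"
    proof (rule summable_on_SigmaI[where g = gs])
      fix l' :: nat
      show "((\<lambda>q. g (l', q)) has_sum gs l') UNIV"
        unfolding g_def gs_def using sm[of "L + l'"] by (simp add: has_sum_infsum)
    qed (use gss in \<open>auto simp: g_def\<close>)
    thus ?thesis by simp
  qed
  have "infsum g UNIV = infsum gs UNIV"
  proof -
    have "infsum g (Sigma UNIV (\<lambda>_. UNIV)) = infsum (\<lambda>l'. infsum (\<lambda>q. g (l', q)) UNIV) UNIV"
      by (rule infsum_Sigma_banach[symmetric]) (use gsum in simp)
    thus ?thesis unfolding g_def gs_def by simp
  qed
  also have "\<dots> \<le> infsum (\<lambda>l'. A * \<theta>^L * \<theta>^l') UNIV"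
    by (rule infsum_mono[OF gss geo' gsb])
  also have "\<dots> = A * \<theta>^L / (1 - \<theta>)"
  proof -
    have "(\<lambda>l'. A * \<theta>^L * \<theta>^l') sums (A * \<theta>^L * (1 / (1 - \<theta>)))"
      by (intro sums_mult geometric_sums) (use th in auto)
    hence "((\<lambda>l'. A * \<theta>^L * \<theta>^l') has_sum (A * \<theta>^L * (1 / (1 - \<theta>)))) UNIV"
      by (rule sums_nonneg_imp_has_sum) (use A0 th in auto)
    thus ?thesis by (simp add: infsumI)
  qed
  finally have gle: "infsum g UNIV \<le> A * \<theta>^L / (1 - \<theta>)" .
  have ges: "(\<lambda>n. g (e n)) summable_on UNIV"
    using summable_on_reindex_bij_betw[OF bij, of g] gsum by simp
  have gei: "infsum (\<lambda>n. g (e n)) UNIV = infsum g UNIV"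
    by (rule infsum_reindex_bij_betw[OF bij])
  have g0: "g x \<ge> 0" for x unfolding g_def by (simp add: case_prod_beta)
  have sumg: "summable (\<lambda>n. g (e n))" using ges by (rule summable_on_imp_summable)
  have "infsum (\<lambda>n. g (e n)) UNIV = (\<Sum>n. g (e n))"
    by (rule infsumI, rule sums_nonneg_imp_has_sum) (use sumg g0 summable_sums in auto)
  hence suminf_le: "(\<Sum>n. g (e n)) \<le> \<epsilon>" using gei gle L1 by linarith
  have "hausdorff_pre t \<delta> E \<le> (\<Sum>n. ennreal (diameter (U n) powr t))"
    unfolding hausdorff_pre_def by (rule INF_lower[OF Ucov])
  also have "\<dots> = (\<Sum>n. ennreal (g (e n)))" by (simp add: dg)
  also have "\<dots> = ennreal (\<Sum>n. g (e n))" by (rule suminf_ennreal2) (use g0 sumg in auto)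
  also have "\<dots> \<le> ennreal \<epsilon>" using suminf_le by (rule ennreal_leI)
  finally show ?thesis .
qed

lemma haus_zero:
  fixes E :: "'a::euclidean_space set" and ctr :: "nat \<Rightarrow> 'q::countable \<Rightarrow> 'a" and rad :: "nat \<Rightarrow> 'q \<Rightarrow> real"
  assumes t: "t > 0"
    and rad0: "\<And>l q. rad l q \<ge> 0"
    and cov: "\<And>x L. x \<in> E \<Longrightarrow> \<exists>l\<ge>L. \<exists>q. dist x (ctr l q) \<le> rad l q"
    and sm: "\<And>l. (\<lambda>q. (2 * rad l q) powr t) summable_on UNIV"
    and sb: "\<And>l. infsum (\<lambda>q. (2 * rad l q) powr t) UNIV \<le> A * \<theta>^l"
    and th: "0 \<le> \<theta>" "\<theta> < 1"
    and rb: "\<And>l q. rad l q \<le> R * \<eta>^l" and eta: "0 \<le> \<eta>" "\<eta> < 1"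
  shows "hausdorff_measure t E = 0"
proof -
  have "hausdorff_pre t \<delta> E = 0" if d: "\<delta> > 0" for \<delta>
  proof -
    have "hausdorff_pre t \<delta> E \<le> 0"
    proof (rule ennreal_le_epsilon)
      fix e :: real assume "0 < e"
      hence "hausdorff_pre t \<delta> E \<le> ennreal e"
        by (intro haus_pre_zero[OF t rad0 cov sm sb th rb eta d]) auto
      thus "hausdorff_pre t \<delta> E \<le> 0 + ennreal e" by simp
    qed
    thus ?thesis by simp
  qed
  hence "hausdorff_measure t E \<le> 0"
    unfolding hausdorff_measure_def by (intro SUP_least) auto
  thus ?thesis by simp
qed



lemma besov_bounds:
  fixes \<psi> :: "nat \<Rightarrow> ('n::finite) fn"
  assumes f: "f \<in> besov_inf \<phi> \<psi> s p" and p: "p \<ge> 1"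
  shows "\<exists>B\<ge>0. \<forall>l.
     (\<lambda>(i,k). cc \<psi> f l i k powr p) summable_on (wav_index TYPE('n) \<times> UNIV) \<and>
     infsum (\<lambda>(i,k). cc \<psi> f l i k powr p) (wav_index TYPE('n) \<times> UNIV) \<le> B powr p * 2 powr ((real CARD('n) - s * p) * real l) \<and>
     (\<forall>i\<in>wav_index TYPE('n). \<forall>k. cc \<psi> f l i k \<le> B * 2 powr ((real CARD('n) / p - s) * real l))"
proof -
  let ?I = "wav_index TYPE('n)"
  define T where "T = (\<lambda>l. infsum (\<lambda>(i,k). cc \<psi> f l i k powr p) (?I \<times> UNIV))"
  have sm: "(\<lambda>(i,k). cc \<psi> f l i k powr p) summable_on (?I \<times> UNIV)" for l
    using f unfolding besov_inf_def cc_def by auto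
  have bd: "bounded (range (besov_eps \<psi> s p f))" using f unfolding besov_inf_def by auto
  then obtain B where B: "\<And>j. norm (besov_eps \<psi> s p f j) \<le> B" unfolding bounded_iff by blast
  have B0: "B \<ge> 0" using B[of 0] norm_ge_zero order_trans by blast
  have T0: "T l \<ge> 0" for l unfolding T_def by (rule infsum_nonneg) (auto simp: case_prod_beta)
  have Tp: "T l powr (1/p) \<le> B * 2 powr ((real CARD('n) / p - s) * real l)" for l
  proof -
    have e: "besov_eps \<psi> s p f l = 2 powr ((s - real CARD('n) / p) * real l) * T l powr (1/p)"
      unfolding besov_eps_def T_def cc_def by simp
    have "2 powr ((s - real CARD('n) / p) * real l) * T l powr (1/p) \<le> B"
      using B[of l] e by simp
    hence "T l powr (1/p) \<le> B / 2 powr ((s - real CARD('n) / p) * real l)"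
      by (simp add: field_simps)
    also have "B / 2 powr ((s - real CARD('n) / p) * real l) = B * 2 powr ((real CARD('n) / p - s) * real l)"
    proof -
      have "B / 2 powr ((s - real CARD('n) / p) * real l) = B * 2 powr (- ((s - real CARD('n) / p) * real l))"
        by (simp add: powr_minus divide_inverse)
      also have "- ((s - real CARD('n) / p) * real l) = (real CARD('n) / p - s) * real l"
        by (simp add: algebra_simps)
      finally show ?thesis .
    qed
    finally show ?thesis .
  qed
  have "T l \<le> B powr p * 2 powr ((real CARD('n) - s * p) * real l)" for l
  proof -
    have "T l = (T l powr (1/p)) powr p" using p T0[of l] by (simp add: powr_powr)
    also have "\<dots> \<le> (B * 2 powr ((real CARD('n) / p - s) * real l)) powr p"
      by (rule powr_mono2) (use p Tp in auto)
    also have "\<dots> = B powr p * 2 powr ((real CARD('n) - s * p) * real l)"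
    proof -
      have "(B * 2 powr ((real CARD('n) / p - s) * real l)) powr p = B powr p * 2 powr ((real CARD('n) / p - s) * real l * p)"
        using B0 by (simp add: powr_mult powr_powr)
      also have "(real CARD('n) / p - s) * real l * p = (real CARD('n) - s * p) * real l"
        using p by (simp add: field_simps)
      finally show ?thesis .
    qed
    finally show ?thesis .
  qed
  moreover have "cc \<psi> f l i k \<le> B * 2 powr ((real CARD('n) / p - s) * real l)" if i: "i \<in> ?I" for l i k
  proof -
    have "infsum (\<lambda>(i,k). cc \<psi> f l i k powr p) {(i,k)} \<le> T l"
      unfolding T_def by (rule infsum_mono2) (use sm i in \<open>auto simp: case_prod_beta\<close>)
    hence "cc \<psi> f l i k powr p \<le> T l" by simp
    hence "(cc \<psi> f l i k powr p) powr (1/p) \<le> T l powr (1/p)"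
      by (intro powr_mono2) (use p in auto)
    hence "cc \<psi> f l i k \<le> T l powr (1/p)"
      using p by (simp add: powr_powr cc_def)
    thus ?thesis using Tp[of l] by linarith
  qed
  ultimately show ?thesis using B0 sm unfolding T_def by blast
qed



lemma half_pow: "((1/2)::real)^l = 2 powr (- real l)"
proof -
  have "2 powr (- real l) = inverse ((2::real) ^ l)" by (simp add: powr_minus powr_realpow)
  also have "\<dots> = ((1/2)::real)^l" by (simp only: power_one_over inverse_eq_divide)
  finally show ?thesis by simp
qed

lemma cost_eq:
  fixes c X' M t p :: real
  assumes c: "c \<ge> 0" and X': "X' > 0" and t: "t > 0" and p: "p > 0" and M: "M = t / p"
  shows "(2 * (2 powr (- real l) * (c / X') powr (1/M))) powr t
         = (2 powr ((1 - real l) * t) / X' powr p) * c powr p"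
proof -
  have "(2 * (2 powr (- real l) * (c / X') powr (1/M))) powr t
        = (2 * 2 powr (- real l)) powr t * ((c / X') powr (1/M)) powr t"
    using c X' by (simp add: powr_mult)
  also have "(2 * 2 powr (- real l)) powr t = 2 powr ((1 - real l) * t)"
  proof -
    have "2 * 2 powr (- real l) = 2 powr (1 - real l)"
      by (simp add: powr_diff powr_minus divide_inverse)
    thus ?thesis by (simp add: powr_powr)
  qed
  also have "((c / X') powr (1/M)) powr t = (c / X') powr p"
    using t p M by (simp add: powr_powr)
  also have "(c / X') powr p = c powr p / X' powr p"
    using c X' by (simp add: powr_divide)
  finally show ?thesis by simp
qed

lemma I_props: "finite (wav_index TYPE('n::finite))" "wav_index TYPE('n) \<noteq> {}"
proof -
  show "finite (wav_index TYPE('n))" unfolding wav_index_def by simp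
  have "(2::nat) ^ CARD('n) \<ge> 2 ^ 1" by (rule power_increasing) auto
  thus "wav_index TYPE('n) \<noteq> {}" unfolding wav_index_def by auto
qed

lemma pow2_powr: "(2 powr e) ^ l = 2 powr (e * real l)"
  by (simp add: powr_realpow[symmetric] powr_powr)

lemma alg1:
  fixes Q p B D s \<gamma> t :: real
  assumes Q: "Q > 0" and p: "p > 0" and B: "B \<ge> 0"
  shows "2 powr ((1 - real l) * t) / (2 powr (\<gamma> * real l) / Q) powr p * (B powr p * 2 powr ((D - s * p) * real l))
     = (2 powr t * Q powr p * B powr p) * (2 powr (D - s * p - \<gamma> * p - t)) ^ l"
proof -
  have e1: "(2 powr (\<gamma> * real l) / Q) powr p = 2 powr (\<gamma> * real l * p) / Q powr p"
    using Q by (simp add: powr_divide powr_powr)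
  have e2: "(2 powr (D - s * p - \<gamma> * p - t)) ^ l = 2 powr ((D - s * p - \<gamma> * p - t) * real l)"
    by (rule pow2_powr)
  have e3: "2 powr ((1 - real l) * t) * 2 powr ((D - s * p) * real l) / 2 powr (\<gamma> * real l * p)
      = 2 powr t * 2 powr ((D - s * p - \<gamma> * p - t) * real l)"
  proof -
    have "2 powr ((1 - real l) * t) * 2 powr ((D - s * p) * real l) / 2 powr (\<gamma> * real l * p)
        = 2 powr ((1 - real l) * t + (D - s * p) * real l - \<gamma> * real l * p)"
      by (simp add: powr_add powr_diff)
    also have "\<dots> = 2 powr (t + (D - s * p - \<gamma> * p - t) * real l)"
      by (simp add: algebra_simps)
    also have "\<dots> = 2 powr t * 2 powr ((D - s * p - \<gamma> * p - t) * real l)"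
      by (simp add: powr_add)
    finally show ?thesis .
  qed
  show ?thesis unfolding e1 e2 using Q e3
    by (simp add: field_simps)
qed

lemma alg2:
  fixes Q p B D s \<gamma> M :: real
  assumes Q: "Q > 0" and B: "B \<ge> 0" and M: "M > 0"
  shows "2 powr (- real l) * ((B * 2 powr ((D / p - s) * real l)) / (2 powr (\<gamma> * real l) / Q)) powr (1/M)
     = (B * Q) powr (1/M) * (2 powr ((D / p - s - \<gamma>) / M - 1)) ^ l"
proof -
  have "(B * 2 powr ((D / p - s) * real l)) / (2 powr (\<gamma> * real l) / Q) = (B * Q) * 2 powr ((D / p - s - \<gamma>) * real l)"
  proof -
    have "2 powr ((D / p - s) * real l) / 2 powr (\<gamma> * real l) = 2 powr ((D / p - s - \<gamma>) * real l)"
      by (simp add: powr_diff[symmetric] algebra_simps)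
    thus ?thesis using Q by (simp add: field_simps)
  qed
  hence "((B * 2 powr ((D / p - s) * real l)) / (2 powr (\<gamma> * real l) / Q)) powr (1/M)
      = (B * Q) powr (1/M) * 2 powr ((D / p - s - \<gamma>) * real l / M)"
    using B Q by (simp add: powr_mult powr_powr)
  moreover have "2 powr (- real l) * 2 powr ((D / p - s - \<gamma>) * real l / M) = (2 powr ((D / p - s - \<gamma>) / M - 1)) ^ l"
  proof -
    have "2 powr (- real l) * 2 powr ((D / p - s - \<gamma>) * real l / M) = 2 powr (((D / p - s - \<gamma>) / M - 1) * real l)"
      by (simp add: powr_add[symmetric] algebra_simps)
    thus ?thesis by (simp add: pow2_powr)
  qed
  ultimately show ?thesis by (simp add: algebra_simps)
qed

lemma cover_main:
  fixes \<psi> :: "nat \<Rightarrow> ('n::finite) fn" and f :: "'n fn" and t p s B \<gamma> :: real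
  assumes t: "t > 0" and p: "p \<ge> 1" and B0: "B \<ge> 0"
    and sm: "\<And>l. (\<lambda>(i,k). cc \<psi> f l i k powr p) summable_on (wav_index TYPE('n) \<times> UNIV)"
    and sb: "\<And>l. infsum (\<lambda>(i,k). cc \<psi> f l i k powr p) (wav_index TYPE('n) \<times> UNIV)
               \<le> B powr p * 2 powr ((real CARD('n) - s * p) * real l)"
    and cb: "\<And>l i k. i \<in> wav_index TYPE('n) \<Longrightarrow> cc \<psi> f l i k \<le> B * 2 powr ((real CARD('n) / p - s) * real l)"
    and gam: "real CARD('n) - s * p - \<gamma> * p < t"
  shows "hausdorff_measure t {x. \<forall>L. \<exists>l\<ge>L. Gf (t/p + 2) \<psi> f l x \<ge> 2 powr (\<gamma> * real l)} = 0"
proof -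
  let ?I = "wav_index TYPE('n)"
  define M where "M = t / p"
  have M0: "M > 0" unfolding M_def using t p by simp
  define Q where "Q = 2 * real (card ?I) * (4 * Z2) ^ CARD('n)"
  have Q0: "Q > 0" unfolding Q_def using I_props[where 'n='n] Z2_pos by (simp add: card_gt_0_iff)
  define X' where "X' = (\<lambda>l::nat. 2 powr (\<gamma> * real l) / Q)"
  have X'0: "X' l > 0" for l unfolding X'_def using Q0 by simp
  have cc0: "cc \<psi> f l i k \<ge> 0" for l i k unfolding cc_def by simp
  define rad :: "nat \<Rightarrow> nat \<times> (int^'n) \<Rightarrow> real" where
    "rad = (\<lambda>l q. if fst q \<in> ?I then 2 powr (- real l) * (cc \<psi> f l (fst q) (snd q) / X' l) powr (1/M) else 0)"
  define ctr :: "nat \<Rightarrow> nat \<times> (int^'n) \<Rightarrow> real^'n" where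
    "ctr = (\<lambda>l q. ((1/2)::real)^l *\<^sub>R ofZ (snd q))"
  define Kl where "Kl = (\<lambda>l::nat. 2 powr ((1 - real l) * t) / X' l powr p)"
  show ?thesis
  proof (rule haus_zero[where ctr = ctr and rad = rad and A = "2 powr t * Q powr p * B powr p"
        and \<theta> = "2 powr (real CARD('n) - s * p - \<gamma> * p - t)"
        and R = "(B * Q) powr (1/M)" and \<eta> = "2 powr ((real CARD('n) / p - s - \<gamma>) / M - 1)"])
    show "t > 0" by (rule t)
    show "rad l q \<ge> 0" for l q unfolding rad_def by simp
    show "0 \<le> 2 powr (real CARD('n) - s * p - \<gamma> * p - t)" by simp
    show "2 powr (real CARD('n) - s * p - \<gamma> * p - t) < 1" using gam by (simp add: powr_less_one)
    show "0 \<le> 2 powr ((real CARD('n) / p - s - \<gamma>) / M - 1)" by simp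
    have "(real CARD('n) / p - s - \<gamma>) / M < 1"
    proof -
      have "(real CARD('n) / p - s - \<gamma>) * p < t" using gam p by (simp add: algebra_simps)
      hence "real CARD('n) / p - s - \<gamma> < M" unfolding M_def using p by (simp add: field_simps)
      thus ?thesis using M0 by (simp add: divide_less_eq)
    qed
    thus "2 powr ((real CARD('n) / p - s - \<gamma>) / M - 1) < 1" by (simp add: powr_less_one)
    show "rad l q \<le> (B * Q) powr (1/M) * (2 powr ((real CARD('n) / p - s - \<gamma>) / M - 1)) ^ l" for l q
    proof (cases "fst q \<in> ?I")
      case False thus ?thesis unfolding rad_def by simp
    next
      case True
      have "rad l q \<le> 2 powr (- real l) * ((B * 2 powr ((real CARD('n) / p - s) * real l)) / X' l) powr (1/M)"
        unfolding rad_def using True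
        by (auto intro!: mult_left_mono powr_mono2 divide_right_mono cb simp: X'0 less_imp_le M0 cc0)
      also have "\<dots> = (B * Q) powr (1/M) * (2 powr ((real CARD('n) / p - s - \<gamma>) / M - 1)) ^ l"
        unfolding X'_def by (rule alg2[OF Q0 B0 M0])
      finally show ?thesis .
    qed
    have cost: "(2 * rad l q) powr t = (if fst q \<in> ?I then Kl l * cc \<psi> f l (fst q) (snd q) powr p else 0)" for l q
    proof (cases "fst q \<in> ?I")
      case True
      have "(2 * rad l q) powr t = (2 * (2 powr (- real l) * (cc \<psi> f l (fst q) (snd q) / X' l) powr (1/M))) powr t"
        unfolding rad_def using True by simp
      also have "\<dots> = Kl l * cc \<psi> f l (fst q) (snd q) powr p"
        unfolding Kl_def by (rule cost_eq[OF cc0 X'0 t _ M_def]) (use p in simp)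
      finally show ?thesis using True by simp
    qed (simp add: rad_def)
    have smK: "(\<lambda>q. Kl l * cc \<psi> f l (fst q) (snd q) powr p) summable_on (?I \<times> UNIV)" for l
      using summable_on_cmult_right[OF sm[of l], of "Kl l"] by (simp add: case_prod_beta)
    have eqs: "(\<lambda>q. Kl l * cc \<psi> f l (fst q) (snd q) powr p) summable_on (?I \<times> UNIV) \<longleftrightarrow> (\<lambda>q. (2 * rad l q) powr t) summable_on UNIV" for l
      by (rule summable_on_cong_neutral) (auto simp: cost)
    have eqi: "infsum (\<lambda>q. Kl l * cc \<psi> f l (fst q) (snd q) powr p) (?I \<times> UNIV) = infsum (\<lambda>q. (2 * rad l q) powr t) UNIV" for l
      by (rule infsum_cong_neutral) (auto simp: cost)
    show "(\<lambda>q. (2 * rad l q) powr t) summable_on UNIV" for l using eqs smK by blast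
    show "infsum (\<lambda>q. (2 * rad l q) powr t) UNIV \<le> 2 powr t * Q powr p * B powr p * (2 powr (real CARD('n) - s * p - \<gamma> * p - t)) ^ l" for l
    proof -
      have "infsum (\<lambda>q. (2 * rad l q) powr t) UNIV = Kl l * infsum (\<lambda>(i,k). cc \<psi> f l i k powr p) (?I \<times> UNIV)"
        unfolding eqi[symmetric] using infsum_cmult_right[of "Kl l" "\<lambda>(i,k). cc \<psi> f l i k powr p" "?I \<times> UNIV"] sm[of l]
        by (simp add: case_prod_beta)
      also have "\<dots> \<le> Kl l * (B powr p * 2 powr ((real CARD('n) - s * p) * real l))"
        by (rule mult_left_mono[OF sb]) (simp add: Kl_def)
      also have "\<dots> = 2 powr t * Q powr p * B powr p * (2 powr (real CARD('n) - s * p - \<gamma> * p - t)) ^ l"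
        unfolding Kl_def X'_def by (rule alg1[OF Q0 _ B0]) (use p in simp)
      finally show ?thesis .
    qed
    fix x L assume "x \<in> {x. \<forall>L. \<exists>l\<ge>L. Gf (t/p + 2) \<psi> f l x \<ge> 2 powr (\<gamma> * real l)}"
    then obtain l where l: "l \<ge> L" "Gf (t/p + 2) \<psi> f l x \<ge> 2 powr (\<gamma> * real l)" by blast
    let ?y = "(2::real)^l *\<^sub>R x"
    have "\<exists>i\<in>?I. \<exists>k. cc \<psi> f l i k \<ge> 2 powr (\<gamma> * real l) / (2 * real (card ?I) * (4 * Z2) ^ CARD('n)) * pw (?y - ofZ k) powr (t/p)"
    proof (rule cover_step[OF I_props[where 'n='n] _ cc0 cb])
      show "t / p > 0" using t p by simp
      show "0 < 2 powr (\<gamma> * real l)" by simp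
      show "(\<Sum>i\<in>?I. infsum (\<lambda>k. cc \<psi> f l i k * pw (?y - ofZ k) powr (-(t/p+2))) UNIV) \<ge> 2 powr (\<gamma> * real l)"
        using l(2) unfolding Gf_def by simp
    qed
    then obtain i k where i: "i \<in> ?I" and ik: "cc \<psi> f l i k \<ge> X' l * pw (?y - ofZ k) powr M"
      unfolding X'_def Q_def M_def by blast
    have "pw (?y - ofZ k) powr M \<le> cc \<psi> f l i k / X' l"
      using ik X'0[of l] by (simp add: field_simps)
    hence "(pw (?y - ofZ k) powr M) powr (1/M) \<le> (cc \<psi> f l i k / X' l) powr (1/M)"
      by (intro powr_mono2) (use M0 in auto)
    hence pwle: "pw (?y - ofZ k) \<le> (cc \<psi> f l i k / X' l) powr (1/M)"
      using M0 pw_pos[of "?y - ofZ k"] by (simp add: powr_powr)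
    have "dist x (ctr l (i,k)) \<le> ((1/2)::real)^l * pw (?y - ofZ k)"
      unfolding ctr_def using dist_le_pw[of x l k] by simp
    also have "\<dots> \<le> 2 powr (- real l) * (cc \<psi> f l i k / X' l) powr (1/M)"
      unfolding half_pow by (rule mult_left_mono[OF pwle]) simp
    also have "\<dots> = rad l (i,k)" unfolding rad_def using i by simp
    finally show "\<exists>l\<ge>L. \<exists>q. dist x (ctr l q) \<le> rad l q" using l(1) by blast
  qed
qed



lemma limsup_freq:
  fixes u :: "nat \<Rightarrow> ereal"
  assumes "ereal \<beta> \<le> limsup u" "g < \<beta>"
  shows "frequently (\<lambda>j. ereal g < u j) sequentially"
proof (rule ccontr)
  assume "\<not> ?thesis"
  hence ev: "eventually (\<lambda>j. u j \<le> ereal g) sequentially"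
    by (simp add: not_frequently not_less)
  have "limsup u \<le> ereal g"
    unfolding Limsup_le_iff
  proof (intro allI impI)
    fix y assume "y > ereal g"
    thus "eventually (\<lambda>j. y > u j) sequentially"
      using ev by (rule_tac eventually_mono[OF ev]) auto
  qed
  thus False using assms by (meson ereal_less_eq(3) le_less_trans linorder_not_le order.trans)
qed

lemma logE_gt:
  assumes j: "j \<ge> 1" and y: "y \<ge> 0" and g: "ereal g < logE y / ereal (real j * ln 2)"
  shows "y > (2 powr g)^j"
proof -
  have jl: "real j * ln 2 > 0" using j by simp
  have y0: "y \<noteq> 0"
  proof
    assume "y = 0"
    hence "logE y / ereal (real j * ln 2) = - \<infinity>"
      using jl by (simp add: logE_def)
    thus False using g by simp
  qed
  hence "logE y / ereal (real j * ln 2) = ereal (ln y / (real j * ln 2))"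
    using jl j by (simp add: logE_def)
  hence "g < ln y / (real j * ln 2)" using g by simp
  hence "g * (real j * ln 2) < ln y" using jl by (simp add: field_simps)
  hence "exp (g * (real j * ln 2)) < y" using y y0
    by (metis exp_less_cancel_iff exp_ln_iff order_le_less)
  moreover have "exp (g * (real j * ln 2)) = (2 powr g)^j"
  proof -
    have "(2 powr g)^j = 2 powr (g * real j)" by (rule pow2_powr)
    also have "\<dots> = exp (g * (real j * ln 2))" by (simp add: powr_def algebra_simps)
    finally show ?thesis by simp
  qed
  ultimately show ?thesis by simp
qed

lemma contra_lemma:
  fixes V W :: "nat \<Rightarrow> real"
  assumes ls: "ereal \<beta> \<le> limsup (\<lambda>j. logE (V j) / ereal (real j * ln 2))"
    and g: "g < \<beta>" and V0: "\<And>j. V j \<ge> 0"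
    and ev: "eventually (\<lambda>j. V j \<le> W j \<and> W j < (2 powr g)^j) sequentially"
  shows False
proof -
  have fr: "frequently (\<lambda>j. ereal g < logE (V j) / ereal (real j * ln 2)) sequentially"
    by (rule limsup_freq[OF ls g])
  have ev': "eventually (\<lambda>j. j \<ge> 1 \<and> V j \<le> W j \<and> W j < (2 powr g)^j) sequentially"
    using ev eventually_ge_at_top[of 1] by eventually_elim auto
  obtain j where "j \<ge> 1 \<and> V j \<le> W j \<and> W j < (2 powr g)^j" "ereal g < logE (V j) / ereal (real j * ln 2)"
    using frequently_ex[OF frequently_eventually_conj[OF fr ev']] by blast
  thus False using logE_gt[of j "V j" g] V0[of j] by linarith
qed

lemma sum_trunc:
  fixes b :: "nat \<Rightarrow> real"
  assumes "\<And>l. b l \<ge> 0" "\<And>l. l \<ge> L \<Longrightarrow> b l = 0"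
  shows "(\<Sum>l<j. b l) \<le> (\<Sum>l<L. b l)"
proof (induction j)
  case 0 thus ?case by (simp add: sum_nonneg assms(1))
next
  case (Suc j)
  show ?case
  proof (cases "Suc j \<le> L")
    case True thus ?thesis by (intro sum_mono2) (auto simp: assms(1))
  next
    case False thus ?thesis using Suc assms(2)[of j] by simp
  qed
qed

lemma ev_ratio:
  fixes W :: "nat \<Rightarrow> real"
  assumes "(\<lambda>j. W j / r'^j) \<longlonglongrightarrow> 0" "r' > 0"
  shows "eventually (\<lambda>j. W j < r'^j) sequentially"
proof -
  have "eventually (\<lambda>j. W j / r'^j < 1) sequentially"
    using order_tendstoD(2)[OF assms(1), of 1] by simp
  thus ?thesis by eventually_elim (use assms(2) in \<open>simp add: divide_less_eq\<close>)
qed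

lemma pos_case:
  fixes q :: "nat \<Rightarrow> complex" and a :: complex
  assumes qb: "\<And>l. l \<ge> L \<Longrightarrow> cmod (q l) \<le> C * r^l" and C: "C \<ge> 0" and r: "1 < r" "r < r'"
  shows "eventually (\<lambda>j. cmod (a + (\<Sum>l<j. q l)) \<le> cmod a + (\<Sum>l<L. cmod (q l)) + C * r^j / (r - 1)
        \<and> cmod a + (\<Sum>l<L. cmod (q l)) + C * r^j / (r - 1) < r'^j) sequentially"
proof -
  define A where "A = cmod a + (\<Sum>l<L. cmod (q l))"
  have bound: "cmod (a + (\<Sum>l<j. q l)) \<le> A + C * r^j / (r - 1)" for j
  proof -
    define b where "b = (\<lambda>l. if l < L then cmod (q l) else 0)"
    have ql: "cmod (q l) \<le> b l + C * r^l" for l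
      using qb[of l] C r unfolding b_def by (cases "l < L") auto
    have "cmod (a + (\<Sum>l<j. q l)) \<le> cmod a + (\<Sum>l<j. cmod (q l))"
      by (rule order_trans[OF norm_triangle_ineq add_left_mono[OF norm_sum]])
    also have "(\<Sum>l<j. cmod (q l)) \<le> (\<Sum>l<j. b l) + C * (\<Sum>l<j. r^l)"
      using sum_mono[of "{..<j}" "\<lambda>l. cmod (q l)" "\<lambda>l. b l + C * r^l", OF ql]
      by (simp add: sum.distrib sum_distrib_left)
    also have "(\<Sum>l<j. b l) \<le> (\<Sum>l<L. b l)"
      by (rule sum_trunc) (auto simp: b_def)
    also have "(\<Sum>l<L. b l) = (\<Sum>l<L. cmod (q l))" unfolding b_def by simp
    also have "(\<Sum>l<j. r^l) = (r^j - 1) / (r - 1)" using r by (simp add: geometric_sum)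
    also have "C * ((r^j - 1) / (r - 1)) \<le> C * r^j / (r - 1)"
      using C r by (simp add: divide_right_mono mult_left_mono)
    finally show ?thesis unfolding A_def by simp
  qed
  have r'0: "r' > 0" using r by simp
  have "(\<lambda>j. A * (1/r')^j + C / (r - 1) * (r / r')^j) \<longlonglongrightarrow> A * 0 + C / (r - 1) * 0"
    by (intro tendsto_intros LIMSEQ_power_zero) (use r in auto)
  moreover have "A * (1/r')^j + C / (r - 1) * (r / r')^j = (A + C * r^j / (r - 1)) / r'^j" for j
    using r'0 r by (simp add: field_simps power_divide)
  ultimately have "(\<lambda>j. (A + C * r^j / (r - 1)) / r'^j) \<longlonglongrightarrow> 0" by simp
  hence "eventually (\<lambda>j. A + C * r^j / (r - 1) < r'^j) sequentially"
    by (rule ev_ratio[OF _ r'0])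
  thus ?thesis using bound unfolding A_def by (auto elim: eventually_mono)
qed

lemma neg_case:
  fixes q :: "nat \<Rightarrow> complex"
  assumes qb: "\<And>l. l \<ge> L \<Longrightarrow> cmod (q l) \<le> C * r^l" and C: "C \<ge> 0" and r: "0 < r" "r < 1" "r < r'"
  shows "eventually (\<lambda>j. cmod (\<Sum>n. q (j + n)) \<le> C * r^j / (1 - r) \<and> C * r^j / (1 - r) < r'^j) sequentially"
proof -
  have bound: "cmod (\<Sum>n. q (j + n)) \<le> C * r^j / (1 - r)" if j: "j \<ge> L" for j
  proof -
    have "cmod (\<Sum>n. q (j + n)) \<le> (\<Sum>n. C * r^j * r^n)"
    proof (rule norm_suminf_le)
      show "cmod (q (j + n)) \<le> C * r^j * r^n" for n
        using qb[of "j + n"] j by (simp add: power_add mult.assoc)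
      show "summable (\<lambda>n. C * r^j * r^n)"
        by (intro summable_mult summable_geometric) (use r in auto)
    qed
    also have "\<dots> = C * r^j * (1 / (1 - r))"
      by (rule sums_unique[symmetric], intro sums_mult geometric_sums) (use r in auto)
    finally show ?thesis by simp
  qed
  have r'0: "r' > 0" using r by simp
  have "(\<lambda>j. C / (1 - r) * (r / r')^j) \<longlonglongrightarrow> C / (1 - r) * 0"
    by (intro tendsto_intros LIMSEQ_power_zero) (use r in auto)
  moreover have "C / (1 - r) * (r / r')^j = (C * r^j / (1 - r)) / r'^j" for j
    using r'0 r by (simp add: field_simps power_divide)
  ultimately have "(\<lambda>j. (C * r^j / (1 - r)) / r'^j) \<longlonglongrightarrow> 0" by simp
  hence "eventually (\<lambda>j. C * r^j / (1 - r) < r'^j) sequentially"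
    by (rule ev_ratio[OF _ r'0])
  moreover have "eventually (\<lambda>j. j \<ge> L) sequentially" by (rule eventually_ge_at_top)
  ultimately show ?thesis by eventually_elim (use bound in auto)
qed



lemma smooth_decay_fast: "smooth_decay n g \<Longrightarrow> fast_decay g"
  by (cases n) auto

lemma haus_pre_mono: "E \<subseteq> T \<Longrightarrow> hausdorff_pre t \<delta> E \<le> hausdorff_pre t \<delta> T"
  unfolding hausdorff_pre_def by (rule INF_superset_mono) auto

lemma haus_mono: "E \<subseteq> T \<Longrightarrow> hausdorff_measure t E \<le> hausdorff_measure t T"
  unfolding hausdorff_measure_def by (rule SUP_mono) (use haus_pre_mono in blast)

theorem proposition3p1:
  fixes V :: "int \<Rightarrow> ('n::finite) fn set"
    and \<phi> :: "'n fn" and \<psi> :: "nat \<Rightarrow> 'n fn"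
    and s p \<beta> :: real and f :: "'n fn"
  assumes "orth_MRA_wavelets V \<phi> \<psi>"
    and "smooth_decay (nat \<lfloor>s\<rfloor> + 1) \<phi>"
    and "\<forall>i\<in>wav_index TYPE('n). smooth_decay (nat \<lfloor>s\<rfloor> + 1) (\<psi> i)"
    and "s \<ge> 0" and "p \<ge> 1"
    and "- s \<le> \<beta>" and "\<beta> \<le> real CARD('n) / p - s" and "\<beta> \<noteq> 0"
    and "f \<in> besov_inf \<phi> \<psi> s p"
  shows "hausdorff_dim (Eminus \<phi> \<psi> \<beta> f) \<le> real CARD('n) - s * p - \<beta> * p"
proof -
  note smooth = assms(3) and p = assms(5) and bu = assms(7) and bne = assms(8) and fB = assms(9)
  let ?I = "wav_index TYPE('n)"
  let ?E = "Eminus \<phi> \<psi> \<beta> f"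
  define D where "D = real CARD('n) - s * p - \<beta> * p"
  have D0: "D \<ge> 0"
  proof -
    have "\<beta> * p \<le> (real CARD('n) / p - s) * p" using bu p by (intro mult_right_mono) auto
    also have "\<dots> = real CARD('n) - s * p" using p by (simp add: field_simps)
    finally show ?thesis unfolding D_def by simp
  qed
  obtain B where B0: "B \<ge> 0" and bnds: "\<And>l.
     (\<lambda>(i,k). cc \<psi> f l i k powr p) summable_on (?I \<times> UNIV) \<and>
     infsum (\<lambda>(i,k). cc \<psi> f l i k powr p) (?I \<times> UNIV) \<le> B powr p * 2 powr ((real CARD('n) - s * p) * real l) \<and>
     (\<forall>i\<in>?I. \<forall>k. cc \<psi> f l i k \<le> B * 2 powr ((real CARD('n) / p - s) * real l))"
    using besov_bounds[OF fB p] by blast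
  have key: "hausdorff_measure t ?E = 0" if tD: "t > D" for t
  proof -
    have t0: "t > 0" using tD D0 by linarith
    define \<delta> where "\<delta> = (t - D) / p"
    have \<delta>0: "\<delta> > 0" unfolding \<delta>_def using tD p by simp
    define e where "e = (if \<beta> > 0 then min \<delta> \<beta> else \<delta>)"
    have e0: "e > 0" unfolding e_def using \<delta>0 by auto
    have ed: "e \<le> \<delta>" unfolding e_def by auto
    define \<gamma> where "\<gamma> = \<beta> - e / 2"
    define \<gamma>' where "\<gamma>' = \<beta> - e / 4"
    have gg: "\<gamma> < \<gamma>'" "\<gamma>' < \<beta>" unfolding \<gamma>_def \<gamma>'_def using e0 by auto
    have gpos: "\<beta> > 0 \<Longrightarrow> \<gamma> > 0" unfolding \<gamma>_def e_def by auto
    have gneg: "\<beta> < 0 \<Longrightarrow> \<gamma>' < 0" unfolding \<gamma>'_def using e0 by auto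
    have gt: "real CARD('n) - s * p - \<gamma> * p < t"
    proof -
      have "real CARD('n) - s * p - \<gamma> * p = D + e * p / 2" unfolding D_def \<gamma>_def by (simp add: algebra_simps)
      also have "\<dots> \<le> D + \<delta> * p / 2" using ed p by (simp add: mult_right_mono divide_right_mono)
      also have "\<dots> < D + \<delta> * p" using \<delta>0 p by simp
      also have "\<dots> = t" unfolding \<delta>_def using p by simp
      finally show ?thesis .
    qed
    define b where "b = t / p + 2"
    have b2: "b \<ge> 2" unfolding b_def using t0 p by simp
    have "\<forall>i\<in>?I. \<exists>Ci\<ge>0. \<forall>y. cmod (\<psi> i y) \<le> Ci * pw y powr (-b)"
      using smooth smooth_decay_fast decay_pw b2 by (meson dual_order.trans zero_le_numeral)
    then obtain Cf where Cf: "\<And>i. i \<in> ?I \<Longrightarrow> Cf i \<ge> 0 \<and> (\<forall>y. cmod (\<psi> i y) \<le> Cf i * pw y powr (-b))"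
      by metis
    define C where "C = (\<Sum>i\<in>?I. Cf i)"
    have C0: "C \<ge> 0" unfolding C_def using Cf by (simp add: sum_nonneg)
    have dec: "cmod (\<psi> i y) \<le> C * pw y powr (-b)" if i: "i \<in> ?I" for i y
    proof -
      have "Cf i \<le> C" unfolding C_def by (rule member_le_sum) (use Cf I_props i in auto)
      hence "Cf i * pw y powr (-b) \<le> C * pw y powr (-b)" by (rule mult_right_mono) simp
      thus ?thesis using Cf[OF i] by (meson order_trans)
    qed
    have Qb: "cmod (Qop \<psi> l f x) \<le> C * Gf b \<psi> f l x" for l x
      by (rule Qbound[OF dec b2 C0]) (use bnds in auto)
    define r where "r = 2 powr \<gamma>"
    define r' where "r' = 2 powr \<gamma>'"
    have rr: "0 < r" "r < r'" unfolding r_def r'_def using gg by auto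
    have sub: "?E \<subseteq> {x. \<forall>L. \<exists>l\<ge>L. Gf (t/p + 2) \<psi> f l x \<ge> 2 powr (\<gamma> * real l)}"
    proof (intro subsetI CollectI allI)
      fix x L assume xE: "x \<in> ?E"
      show "\<exists>l\<ge>L. Gf (t/p + 2) \<psi> f l x \<ge> 2 powr (\<gamma> * real l)"
      proof (rule ccontr)
        assume "\<not> ?thesis"
        hence lt: "\<And>l. l \<ge> L \<Longrightarrow> Gf b \<psi> f l x < 2 powr (\<gamma> * real l)"
          unfolding b_def by (meson not_le)
        have qb: "cmod (Qop \<psi> l f x) \<le> C * r^l" if "l \<ge> L" for l
        proof -
          have "cmod (Qop \<psi> l f x) \<le> C * Gf b \<psi> f l x" by (rule Qb)
          also have "\<dots> \<le> C * 2 powr (\<gamma> * real l)" using lt[OF that] C0 by (simp add: mult_left_mono)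
          also have "2 powr (\<gamma> * real l) = r^l" unfolding r_def by (simp add: pow2_powr)
          finally show ?thesis .
        qed
        show False
        proof (cases "\<beta> > 0")
          case True
          have ls: "ereal \<beta> \<le> limsup (\<lambda>j. logE (cmod (Pop \<phi> \<psi> j f x)) / ereal (real j * ln 2))"
            using xE True unfolding Eminus_def by simp
          have r1: "1 < r" unfolding r_def using gpos[OF True] by simp
          show False
          proof (rule contra_lemma[OF ls gg(2)])
            show "cmod (Pop \<phi> \<psi> j f x) \<ge> 0" for j by simp
            show "eventually (\<lambda>j. cmod (Pop \<phi> \<psi> j f x) \<le> cmod (infsum (\<lambda>k. scal_coef \<phi> f k * \<phi> (x - ofZ k)) UNIV) + (\<Sum>l<L. cmod (Qop \<psi> l f x)) + C * r^j / (r - 1)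
               \<and> cmod (infsum (\<lambda>k. scal_coef \<phi> f k * \<phi> (x - ofZ k)) UNIV) + (\<Sum>l<L. cmod (Qop \<psi> l f x)) + C * r^j / (r - 1) < (2 powr \<gamma>')^j) sequentially"
              using pos_case[of L "\<lambda>l. Qop \<psi> l f x" C r r' "infsum (\<lambda>k. scal_coef \<phi> f k * \<phi> (x - ofZ k)) UNIV", OF qb C0 r1 rr(2)]
              unfolding Pop_def r'_def by simp
          qed
        next
          case False
          hence bneg: "\<beta> < 0" using bne by simp
          have ls: "ereal \<beta> \<le> limsup (\<lambda>j. logE (cmod (Rop \<psi> j f x)) / ereal (real j * ln 2))"
            using xE False unfolding Eminus_def by simp
          have r1: "r < 1" unfolding r_def by (intro powr_less_one) (use gg gneg[OF bneg] in auto)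
          show False
          proof (rule contra_lemma[OF ls gg(2)])
            show "cmod (Rop \<psi> j f x) \<ge> 0" for j by simp
            show "eventually (\<lambda>j. cmod (Rop \<psi> j f x) \<le> C * r^j / (1 - r) \<and> C * r^j / (1 - r) < (2 powr \<gamma>')^j) sequentially"
              using neg_case[of L "\<lambda>l. Qop \<psi> l f x" C r r', OF qb C0 rr(1) r1 rr(2)]
              unfolding Rop_def r'_def by simp
          qed
        qed
      qed
    qed
    have "hausdorff_measure t ?E \<le> hausdorff_measure t {x. \<forall>L. \<exists>l\<ge>L. Gf (t/p + 2) \<psi> f l x \<ge> 2 powr (\<gamma> * real l)}"
      by (rule haus_mono[OF sub])
    also have "\<dots> = 0"
      by (rule cover_main[OF t0 p B0 _ _ _ gt]) (use bnds in auto)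
    finally show ?thesis by simp
  qed
  have "Inf {t. t \<ge> 0 \<and> hausdorff_measure t ?E = 0} \<le> D"
  proof (rule field_le_epsilon)
    fix e :: real assume e: "e > 0"
    show "Inf {t. t \<ge> 0 \<and> hausdorff_measure t ?E = 0} \<le> D + e"
      by (rule cInf_lower) (use key e D0 in \<open>auto intro: bdd_belowI[of _ 0]\<close>)
  qed
  thus ?thesis unfolding hausdorff_dim_def D_def .
qed


end
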